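(* Let $p$ be prime, $n\ge1$, $G=G(p,n)$ the Heisenberg group acting on $X=\mathbb{Z}_p^{n+2}$ by matrix–vector multiplication with permutation representation $V=\mathbb{C}^X$, and let $H=\{(0,0,z):z\in\mathbb{Z}_p\}$ be the center of $G$. Then the coset identification problem for $H$ (given oracle access to the permutation matrix of an unknown $a=(x,y,z)\in G$, determine the coset $aH$, i.e. determine $x$ and $y$) can be solved by a single-query quantum algorithm with success probability $1$.
   Context: $G(p,n)$ is the group of $(n+2)\times(n+2)$ matrices over $\mathbb{Z}_p$ with $1$'s on the diagonal whose only other nonzero entries lie in the first row and last column, identified with triples $(x,y,z)$, $x,y\in\mathbb{Z}_p^n$, $z\in\mathbb{Z}_p$, where $(1,x,z)$ is the first row and $(z,y,1)^T$ the last column. A single-query algorithm consists of $N\ge1$, a unit vector $\psi\in V\otimes\mathbb{C}^N$, a unitary $U_1$ and a POVM indexed by the cosets of $H$; it succeeds with probability $\frac1{|G|}\sum_a\langle\psi_a|E_{aH}|\psi_a\rangle$ where $\psi_a=U_1(\pi(a)\otimes I)\psi$. *)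

theory Defs
  imports Complex_Main "HOL-Computational_Algebra.Primes"
begin

text \<open>Vectors in Z_p^m: functions nat => int with entries in {0..<p} on indices < m
  and zero elsewhere (so the representation is canonical).\<close>
definition Zp_vecs :: "nat \<Rightarrow> nat \<Rightarrow> (nat \<Rightarrow> int) set" where
  "Zp_vecs p m = {v. (\<forall>i<m. v i \<in> {0..<int p}) \<and> (\<forall>i\<ge>m. v i = 0)}"

definition heis_X :: "nat \<Rightarrow> nat \<Rightarrow> (nat \<Rightarrow> int) set" where
  "heis_X p n = Zp_vecs p (n + 2)"

type_synonym heis_elt = "(nat \<Rightarrow> int) \<times> (nat \<Rightarrow> int) \<times> int"

definition heis_group :: "nat \<Rightarrow> nat \<Rightarrow> heis_elt set" where
  "heis_group p n = {(x, y, z). x \<in> Zp_vecs p n \<and> y \<in> Zp_vecs p n \<and> z \<in> {0..<int p}}"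

fun heis_mat :: "nat \<Rightarrow> heis_elt \<Rightarrow> nat \<Rightarrow> nat \<Rightarrow> int" where
  "heis_mat n (x, y, z) i j =
     (if i = j then 1
      else if i = 0 \<and> 1 \<le> j \<and> j \<le> n then x (j - 1)
      else if i = 0 \<and> j = n + 1 then z
      else if 1 \<le> i \<and> i \<le> n \<and> j = n + 1 then y (i - 1)
      else 0)"

definition heis_act :: "nat \<Rightarrow> nat \<Rightarrow> heis_elt \<Rightarrow> (nat \<Rightarrow> int) \<Rightarrow> (nat \<Rightarrow> int)" where
  "heis_act p n a v = (\<lambda>i. if i < n + 2 then (\<Sum>j<n + 2. heis_mat n a i j * v j) mod int p else 0)"

text \<open>Group law (matrix multiplication) on triples:
  (x,y,z)(x',y',z') = (x+x', y+y', z+z'+x.y').\<close>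
fun heis_mult :: "nat \<Rightarrow> nat \<Rightarrow> heis_elt \<Rightarrow> heis_elt \<Rightarrow> heis_elt" where
  "heis_mult p n (x, y, z) (x', y', z') =
     ((\<lambda>i. if i < n then (x i + x' i) mod int p else 0),
      (\<lambda>i. if i < n then (y i + y' i) mod int p else 0),
      (z + z' + (\<Sum>i<n. x i * y' i)) mod int p)"

definition heis_center :: "nat \<Rightarrow> nat \<Rightarrow> heis_elt set" where
  "heis_center p n = {((\<lambda>_. 0), (\<lambda>_. 0), z) | z. z \<in> {0..<int p}}"

definition heis_coset :: "nat \<Rightarrow> nat \<Rightarrow> heis_elt \<Rightarrow> heis_elt set" where
  "heis_coset p n a = heis_mult p n a ` heis_center p n"

definition heis_cosets :: "nat \<Rightarrow> nat \<Rightarrow> heis_elt set set" where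
  "heis_cosets p n = heis_coset p n ` heis_group p n"

text \<open>Finite-dimensional linear algebra on C^S, with vectors as functions S => complex
  and operators as matrices S => S => complex (only entries on S matter).\<close>
definition apply_op :: "'s set \<Rightarrow> ('s \<Rightarrow> 's \<Rightarrow> complex) \<Rightarrow> ('s \<Rightarrow> complex) \<Rightarrow> ('s \<Rightarrow> complex)" where
  "apply_op S M f = (\<lambda>s. \<Sum>t\<in>S. M s t * f t)"

definition inner_c :: "'s set \<Rightarrow> ('s \<Rightarrow> complex) \<Rightarrow> ('s \<Rightarrow> complex) \<Rightarrow> complex" where
  "inner_c S f g = (\<Sum>s\<in>S. cnj (f s) * g s)"

definition is_unit_vec :: "'s set \<Rightarrow> ('s \<Rightarrow> complex) \<Rightarrow> bool" where
  "is_unit_vec S f \<longleftrightarrow> inner_c S f f = 1"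

definition is_unitary :: "'s set \<Rightarrow> ('s \<Rightarrow> 's \<Rightarrow> complex) \<Rightarrow> bool" where
  "is_unitary S U \<longleftrightarrow> (\<forall>s\<in>S. \<forall>t\<in>S. (\<Sum>k\<in>S. cnj (U k s) * U k t) = (if s = t then 1 else 0))"

definition is_psd :: "'s set \<Rightarrow> ('s \<Rightarrow> 's \<Rightarrow> complex) \<Rightarrow> bool" where
  "is_psd S E \<longleftrightarrow> (\<forall>f. Im (inner_c S f (apply_op S E f)) = 0 \<and> Re (inner_c S f (apply_op S E f)) \<ge> 0)"

definition is_povm :: "'s set \<Rightarrow> 'c set \<Rightarrow> ('c \<Rightarrow> 's \<Rightarrow> 's \<Rightarrow> complex) \<Rightarrow> bool" where
  "is_povm S C E \<longleftrightarrow> (\<forall>c\<in>C. is_psd S (E c)) \<and>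
     (\<forall>s\<in>S. \<forall>t\<in>S. (\<Sum>c\<in>C. E c s t) = (if s = t then 1 else 0))"

definition perm_rep :: "nat \<Rightarrow> nat \<Rightarrow> heis_elt \<Rightarrow> (nat \<Rightarrow> int) \<Rightarrow> (nat \<Rightarrow> int) \<Rightarrow> complex" where
  "perm_rep p n a w v = (if w = heis_act p n a v then 1 else 0)"

text \<open>pi(a) tensor I_N acting on V tensor C^N, basis indexed by X x {0..<N}.\<close>
definition perm_rep_ext :: "nat \<Rightarrow> nat \<Rightarrow> heis_elt \<Rightarrow>
    ((nat \<Rightarrow> int) \<times> nat) \<Rightarrow> ((nat \<Rightarrow> int) \<times> nat) \<Rightarrow> complex" where
  "perm_rep_ext p n a s t = perm_rep p n a (fst s) (fst t) * (if snd s = snd t then 1 else 0)"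

definition tensor_space :: "nat \<Rightarrow> nat \<Rightarrow> nat \<Rightarrow> ((nat \<Rightarrow> int) \<times> nat) set" where
  "tensor_space p n N = heis_X p n \<times> {..<N}"

definition success_prob :: "nat \<Rightarrow> nat \<Rightarrow> nat \<Rightarrow> ((nat \<Rightarrow> int) \<times> nat \<Rightarrow> complex) \<Rightarrow>
    ((nat \<Rightarrow> int) \<times> nat \<Rightarrow> (nat \<Rightarrow> int) \<times> nat \<Rightarrow> complex) \<Rightarrow>
    (heis_elt set \<Rightarrow> (nat \<Rightarrow> int) \<times> nat \<Rightarrow> (nat \<Rightarrow> int) \<times> nat \<Rightarrow> complex) \<Rightarrow> complex" where
  "success_prob p n N psi U E =
     (let S = tensor_space p n N;
          psi_a = (\<lambda>a. apply_op S U (apply_op S (perm_rep_ext p n a) psi))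
      in (1 / of_nat (card (heis_group p n))) *
         (\<Sum>a\<in>heis_group p n. inner_c S (psi_a a) (apply_op S (E (heis_coset p n a)) (psi_a a))))"

end

theory Submission
  imports Defs
begin


definition ee :: "nat \<Rightarrow> int \<Rightarrow> complex" where
  "ee p k = cis (2 * pi * of_int k / of_nat p)"

lemma ee_add: "ee p (a + b) = ee p a * ee p b"
  unfolding ee_def by (simp add: cis_mult distrib_left add_divide_distrib)

lemma ee_0[simp]: "ee p 0 = 1" unfolding ee_def by simp

lemma ee_cnj: "cnj (ee p k) = ee p (- k)"
  unfolding ee_def by (simp add: cis_cnj)

lemma ee_cnj_mult: "cnj (ee p k) * ee p k = 1"
  by (simp add: ee_cnj ee_add[symmetric])

lemma ee_mult_p: "p > 0 \<Longrightarrow> ee p (int p * m) = 1"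
proof -
  assume "p > 0"
  have "2 * pi * of_int (int p * m) / of_nat p = 2 * pi * of_int m"
    using \<open>p > 0\<close> by simp
  thus ?thesis unfolding ee_def by simp
qed

lemma ee_mod: "p > 0 \<Longrightarrow> ee p (k mod int p) = ee p k"
proof -
  assume p: "p > 0"
  have "k = k mod int p + int p * (k div int p)" by simp
  hence "ee p k = ee p (k mod int p) * ee p (int p * (k div int p))"
    by (metis ee_add)
  thus ?thesis using ee_mult_p[OF p] by simp
qed

lemma ee_eq_1: "p > 0 \<Longrightarrow> ee p d = 1 \<Longrightarrow> int p dvd d"
proof -
  assume p: "p > 0" and h: "ee p d = 1"
  have "cos (2 * pi * of_int d / of_nat p) = 1"
    using h unfolding ee_def by (metis cis.sel(1) one_complex.sel(1))
  then obtain m :: int where m: "2 * pi * of_int d / of_nat p = of_int m * 2 * pi"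
    using cos_one_2pi_int by blast
  hence "of_int d = of_int m * (of_nat p :: real)"
    using p by (simp add: field_simps)
  hence "d = m * int p" by (metis of_int_eq_iff of_int_mult of_int_of_nat_eq)
  thus ?thesis by simp
qed

lemma ee_pow: "ee p d ^ i = ee p (d * int i)"
  unfolding ee_def by (simp add: DeMoivre algebra_simps)

lemma ee_geom:
  assumes "p > 0"
  shows "(\<Sum>t\<in>{0..<int p}. ee p (d * t)) = (if int p dvd d then of_nat p else 0)"
proof -
  have "{0..<int p} = int ` {..<p}" by (metis atLeast0LessThan image_int_atLeastLessThan of_nat_0)
  hence "(\<Sum>t\<in>{0..<int p}. ee p (d * t)) = (\<Sum>i<p. ee p d ^ i)"
    by (simp add: sum.reindex ee_pow)
  also have "\<dots> = (if int p dvd d then of_nat p else 0)"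
  proof (cases "int p dvd d")
    case True
    then obtain m where "d = int p * m" by blast
    hence "ee p d = 1" using ee_mult_p assms by simp
    thus ?thesis using True by simp
  next
    case False
    hence ne: "ee p d \<noteq> 1" using ee_eq_1 assms by blast
    have "ee p d ^ p = 1" using ee_pow ee_mult_p assms by (simp add: mult.commute)
    thus ?thesis using ne False by (simp add: sum_gp_strict)
  qed
  finally show ?thesis .
qed



lemma Zp_vecs_0: "Zp_vecs p 0 = {\<lambda>_. 0}"
  unfolding Zp_vecs_def by auto

lemma Zp_vecs_Suc: "Zp_vecs p (Suc m) = (\<lambda>(v,c). v(m:=c)) ` (Zp_vecs p m \<times> {0..<int p})"
proof (rule set_eqI, rule iffI)
  fix w assume w: "w \<in> Zp_vecs p (Suc m)"
  have "w(m:=0) \<in> Zp_vecs p m" using w unfolding Zp_vecs_def by auto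
  moreover have "w m \<in> {0..<int p}" using w unfolding Zp_vecs_def by auto
  moreover have "w = (w(m:=0))(m := w m)" by simp
  ultimately show "w \<in> (\<lambda>(v,c). v(m:=c)) ` (Zp_vecs p m \<times> {0..<int p})"
    by (intro image_eqI[where x="(w(m:=0), w m)"]) auto
next
  fix w assume "w \<in> (\<lambda>(v,c). v(m:=c)) ` (Zp_vecs p m \<times> {0..<int p})"
  thus "w \<in> Zp_vecs p (Suc m)" unfolding Zp_vecs_def by (auto simp: less_Suc_eq)
qed

lemma Zp_vecs_Suc_inj: "inj_on (\<lambda>(v,c). v(m:=c)) (Zp_vecs p m \<times> {0..<int p})"
proof (rule inj_onI, clarify)
  fix v c v' c'
  assume v: "v \<in> Zp_vecs p m" and v': "v' \<in> Zp_vecs p m" and eq: "v(m := c) = v'(m := c')"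
  have "c = c'" using fun_cong[OF eq, of m] by simp
  moreover have "v = v'"
  proof
    fix i show "v i = v' i"
    proof (cases "i = m")
      case True thus ?thesis using v v' unfolding Zp_vecs_def by auto
    next
      case False thus ?thesis using fun_cong[OF eq, of i] by simp
    qed
  qed
  ultimately show "v = v' \<and> c = c'" by simp
qed

lemma finite_Zp_vecs: "finite (Zp_vecs p m)"
  by (induction m) (auto simp: Zp_vecs_0 Zp_vecs_Suc)

lemma sum_prod_Zp:
  "(\<Sum>v\<in>Zp_vecs p m. \<Prod>i<m. g i (v i)) = (\<Prod>i<m. \<Sum>t\<in>{0..<int p}. (g i t :: complex))"
proof (induction m)
  case 0 thus ?case by (simp add: Zp_vecs_0)
next
  case (Suc m)
  have "(\<Sum>v\<in>Zp_vecs p (Suc m). \<Prod>i<Suc m. g i (v i))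
      = (\<Sum>vc\<in>Zp_vecs p m \<times> {0..<int p}. \<Prod>i<Suc m. g i (((\<lambda>(v,c). v(m:=c)) vc) i))"
    unfolding Zp_vecs_Suc by (rule sum.reindex[OF Zp_vecs_Suc_inj, unfolded comp_def])
  also have "\<dots> = (\<Sum>vc\<in>Zp_vecs p m \<times> {0..<int p}. (\<Prod>i<m. g i (fst vc i)) * g m (snd vc))"
    by (rule sum.cong, auto intro!: prod.cong)
  also have "\<dots> = (\<Sum>v\<in>Zp_vecs p m. \<Sum>c\<in>{0..<int p}. (\<Prod>i<m. g i (v i)) * g m c)"
    by (simp add: sum.cartesian_product split_def)
  also have "\<dots> = (\<Sum>v\<in>Zp_vecs p m. \<Prod>i<m. g i (v i)) * (\<Sum>c\<in>{0..<int p}. g m c)"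
    by (rule sum_product[symmetric])
  finally show ?case using Suc by simp
qed

definition enc :: "nat \<Rightarrow> nat \<Rightarrow> (nat \<Rightarrow> int) \<Rightarrow> nat" where
  "enc p m v = (\<Sum>i<m. nat (v i) * p ^ i)"

lemma enc_bound: "v \<in> Zp_vecs p m \<Longrightarrow> enc p m v < p ^ m"
proof (induction m arbitrary: v)
  case 0 thus ?case by (simp add: enc_def)
next
  case (Suc m)
  have v': "v(m:=0) \<in> Zp_vecs p m" using Suc.prems unfolding Zp_vecs_def by auto
  have e: "enc p m (v(m:=0)) = enc p m v" unfolding enc_def by (rule sum.cong) auto
  have lt: "enc p m v < p ^ m" using Suc.IH[OF v'] unfolding e .
  have "v m \<in> {0..<int p}" using Suc.prems unfolding Zp_vecs_def by simp
  hence p0: "p > 0" by simp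
  have vm: "nat (v m) \<le> p - 1" using Suc.prems unfolding Zp_vecs_def by auto
  have "enc p (Suc m) v = enc p m v + nat (v m) * p ^ m" by (simp add: enc_def)
  also have "\<dots> < p ^ m + (p - 1) * p ^ m" using lt vm by (meson add_less_le_mono mult_le_mono1)
  also have "\<dots> = p ^ Suc m" using p0 by (cases p) auto
  finally show ?case .
qed

lemma enc_inj: "v \<in> Zp_vecs p m \<Longrightarrow> w \<in> Zp_vecs p m \<Longrightarrow> enc p m v = enc p m w \<Longrightarrow> v = w"
proof (induction m arbitrary: v w)
  case 0 thus ?case by (simp add: Zp_vecs_0)
next
  case (Suc m)
  have v': "v(m:=0) \<in> Zp_vecs p m" using Suc.prems unfolding Zp_vecs_def by auto
  have w': "w(m:=0) \<in> Zp_vecs p m" using Suc.prems unfolding Zp_vecs_def by auto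
  have ev: "enc p m (v(m:=0)) = enc p m v" unfolding enc_def by (rule sum.cong) auto
  have ew: "enc p m (w(m:=0)) = enc p m w" unfolding enc_def by (rule sum.cong) auto
  have lv: "enc p m v < p ^ m" using enc_bound[OF v'] unfolding ev .
  have lw: "enc p m w < p ^ m" using enc_bound[OF w'] unfolding ew .
  have E: "enc p m v + nat (v m) * p ^ m = enc p m w + nat (w m) * p ^ m"
    using Suc.prems(3) by (simp add: enc_def)
  have "(enc p m v + nat (v m) * p ^ m) mod p ^ m = enc p m v" using lv by simp
  moreover have "(enc p m w + nat (w m) * p ^ m) mod p ^ m = enc p m w" using lw by simp
  ultimately have e1: "enc p m v = enc p m w" using E by metis
  hence "nat (v m) * p ^ m = nat (w m) * p ^ m" using E by simp
  moreover have "p ^ m > 0" using lv by linarith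
  ultimately have "nat (v m) = nat (w m)" by (metis mult_right_cancel neq0_conv)
  moreover have "0 \<le> v m" "0 \<le> w m" using Suc.prems(1,2) unfolding Zp_vecs_def by simp_all
  ultimately have vm: "v m = w m" by simp
  have "v(m:=0) = w(m:=0)" by (rule Suc.IH[OF v' w']) (simp only: ev ew e1)
  show "v = w"
  proof
    fix i show "v i = w i" using vm fun_cong[OF \<open>v(m:=0) = w(m:=0)\<close>, of i] by (cases "i = m") auto
  qed
qed



lemma sum_SS: "(\<Sum>j<Suc (Suc n). f j) = f 0 + (\<Sum>j<n. f (Suc j)) + f (Suc n)"
  by (simp only: sum.lessThan_Suc[of f "Suc n"]) (simp only: sum.lessThan_Suc_shift)

lemma modh1: "((a - b - c) mod m + b + c) mod (m::int) = a mod m"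
proof -
  have "((a - b - c) mod m + b + c) mod m = ((a - b - c) + b + c) mod m"
    by (metis mod_add_left_eq add.assoc)
  thus ?thesis by simp
qed

lemma modh2: "((a + b + c) mod m - b - c) mod (m::int) = a mod m"
proof -
  have "((a + b + c) mod m - b - c) mod m = ((a + b + c) - b - c) mod m"
    by (metis mod_diff_left_eq diff_diff_eq)
  thus ?thesis by simp
qed

lemma act_0: "heis_act p n (x,y,z) u 0 = (u 0 + (\<Sum>j<n. x j * u (Suc j)) + z * u (Suc n)) mod int p"
proof -
  have "(\<Sum>j<n + 2. heis_mat n (x,y,z) 0 j * u j) = u 0 + (\<Sum>j<n. x j * u (Suc j)) + z * u (Suc n)"
    by (simp only: add_2_eq_Suc' sum_SS) simp
  thus ?thesis by (simp add: heis_act_def)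
qed

lemma act_mid: "1 \<le> i \<Longrightarrow> i \<le> n \<Longrightarrow>
   heis_act p n (x,y,z) u i = (u i + y (i - 1) * u (Suc n)) mod int p"
proof -
  assume i: "1 \<le> i" "i \<le> n"
  have "(\<Sum>j<n. heis_mat n (x,y,z) i (Suc j) * u (Suc j)) = (\<Sum>j<n. if j = i - 1 then u i else 0)"
    using i by (intro sum.cong) auto
  also have "\<dots> = u i" using i by simp
  finally have "(\<Sum>j<n + 2. heis_mat n (x,y,z) i j * u j) = u i + y (i - 1) * u (Suc n)"
    using i by (simp only: add_2_eq_Suc' sum_SS) simp
  thus ?thesis using i by (simp add: heis_act_def)
qed

lemma act_last: "heis_act p n (x,y,z) u (Suc n) = u (Suc n) mod int p"
proof -
  have "(\<Sum>j<n + 2. heis_mat n (x,y,z) (Suc n) j * u j) = u (Suc n)"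
    by (simp only: add_2_eq_Suc' sum_SS) simp
  thus ?thesis by (simp add: heis_act_def)
qed

lemma act_big: "i \<ge> n + 2 \<Longrightarrow> heis_act p n a u i = 0"
  by (simp add: heis_act_def)

definition inva :: "nat \<Rightarrow> nat \<Rightarrow> heis_elt \<Rightarrow> (nat \<Rightarrow> int) \<Rightarrow> (nat \<Rightarrow> int)" where
  "inva p n a v = (case a of (x,y,z) \<Rightarrow> (\<lambda>i.
     if i = 0 then (v 0 - (\<Sum>j<n. x j * ((v (Suc j) - y j * v (Suc n)) mod int p)) - z * v (Suc n)) mod int p
     else if i \<le> n then (v i - y (i - 1) * v (Suc n)) mod int p
     else if i = Suc n then v (Suc n) else 0))"

lemma X_range: "v \<in> heis_X p n \<Longrightarrow> i < n + 2 \<Longrightarrow> 0 \<le> v i \<and> v i < int p"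
  unfolding heis_X_def Zp_vecs_def by auto

lemma X_zero: "v \<in> heis_X p n \<Longrightarrow> i \<ge> n + 2 \<Longrightarrow> v i = 0"
  unfolding heis_X_def Zp_vecs_def by auto

lemma X_mod: "v \<in> heis_X p n \<Longrightarrow> i < n + 2 \<Longrightarrow> v i mod int p = v i"
  using X_range by simp

lemma inva_X: "p > 0 \<Longrightarrow> v \<in> heis_X p n \<Longrightarrow> inva p n (x,y,z) v \<in> heis_X p n"
  unfolding heis_X_def Zp_vecs_def inva_def using X_range[of v p n]
  by (auto simp: heis_X_def)

lemma act_inva: "p > 0 \<Longrightarrow> v \<in> heis_X p n \<Longrightarrow> heis_act p n (x,y,z) (inva p n (x,y,z) v) = v"
proof (rule ext)
  fix i assume p: "p > 0" and v: "v \<in> heis_X p n"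
  let ?u = "inva p n (x,y,z) v"
  have uS: "?u (Suc j) = (v (Suc j) - y j * v (Suc n)) mod int p" if "j < n" for j
    using that by (simp add: inva_def)
  consider "i = 0" | "1 \<le> i \<and> i \<le> n" | "i = Suc n" | "i \<ge> n + 2" by linarith
  thus "heis_act p n (x,y,z) ?u i = v i"
  proof cases
    case 1
    have "(\<Sum>j<n. x j * ?u (Suc j)) = (\<Sum>j<n. x j * ((v (Suc j) - y j * v (Suc n)) mod int p))"
      using uS by (intro sum.cong) auto
    hence "heis_act p n (x,y,z) ?u 0 = (v 0 mod int p)"
      by (simp add: act_0 inva_def modh1)
    thus ?thesis using 1 X_mod[OF v, of 0] by simp
  next
    case 2
    hence "heis_act p n (x,y,z) ?u i = v i mod int p"
      by (simp add: act_mid inva_def mod_simps)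
    thus ?thesis using 2 X_mod[OF v, of i] by simp
  next
    case 3
    thus ?thesis using X_mod[OF v, of "Suc n"] by (simp add: act_last inva_def)
  next
    case 4
    thus ?thesis using X_zero[OF v] act_big by simp
  qed
qed

lemma inva_act: "p > 0 \<Longrightarrow> u \<in> heis_X p n \<Longrightarrow> inva p n (x,y,z) (heis_act p n (x,y,z) u) = u"
proof (rule ext)
  fix i assume p: "p > 0" and u: "u \<in> heis_X p n"
  let ?v = "heis_act p n (x,y,z) u"
  have vlast: "?v (Suc n) = u (Suc n)" using X_mod[OF u, of "Suc n"] by (simp add: act_last)
  have vmid: "(?v (Suc j) - y j * ?v (Suc n)) mod int p = u (Suc j)" if "j < n" for j
  proof -
    have "(?v (Suc j) - y j * ?v (Suc n)) mod int p = u (Suc j) mod int p"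
      using that vlast by (simp add: act_mid mod_simps)
    thus ?thesis using X_mod[OF u, of "Suc j"] that by simp
  qed
  consider "i = 0" | "1 \<le> i \<and> i \<le> n" | "i = Suc n" | "i \<ge> n + 2" by linarith
  thus "inva p n (x,y,z) ?v i = u i"
  proof cases
    case 1
    have "(\<Sum>j<n. x j * ((?v (Suc j) - y j * ?v (Suc n)) mod int p)) = (\<Sum>j<n. x j * u (Suc j))"
      using vmid by (intro sum.cong) auto
    hence "inva p n (x,y,z) ?v 0 = u 0 mod int p"
      using vlast by (simp add: act_0 inva_def modh2)
    thus ?thesis using 1 X_mod[OF u, of 0] by simp
  next
    case 2
    then obtain j where j: "i = Suc j" "j < n" by (cases i) auto
    thus ?thesis using vmid[OF j(2)] by (simp add: inva_def)
  next
    case 3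
    thus ?thesis using vlast by (simp add: inva_def)
  next
    case 4
    thus ?thesis using X_zero[OF u] by (simp add: inva_def)
  qed
qed

lemma act_eq_iff: "p > 0 \<Longrightarrow> u \<in> heis_X p n \<Longrightarrow> v \<in> heis_X p n \<Longrightarrow>
  (v = heis_act p n (x,y,z) u) \<longleftrightarrow> (u = inva p n (x,y,z) v)"
  using act_inva inva_act by metis



definition md :: "nat \<Rightarrow> nat \<Rightarrow> (nat \<Rightarrow> int) \<Rightarrow> (nat \<Rightarrow> int) \<Rightarrow> (nat \<Rightarrow> int)" where
  "md p n y v = (\<lambda>i. if i < n then (v (Suc i) - y i) mod int p else 0)"

definition cc :: "nat \<Rightarrow> nat \<Rightarrow> complex" where
  "cc p n = complex_of_real (1 / sqrt (real p ^ Suc n))"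

definition Phi :: "nat \<Rightarrow> nat \<Rightarrow> heis_elt \<Rightarrow> (nat \<Rightarrow> int) \<times> nat \<Rightarrow> complex" where
  "Phi p n a s = (case a of (x,y,z) \<Rightarrow> case s of (v,k) \<Rightarrow>
     if v (Suc n) = 1 \<and> k = enc p n (md p n y v)
     then ee p (v 0 - (\<Sum>j<n. x j * md p n y v j) - z) * cc p n else 0)"

lemma md_Zp: "p > 0 \<Longrightarrow> md p n y v \<in> Zp_vecs p n"
  unfolding md_def Zp_vecs_def by auto

lemma cc_cnj: "cnj (cc p n) = cc p n" by (simp add: cc_def)

lemma cc_sq: "p > 0 \<Longrightarrow> cc p n * cc p n = 1 / of_nat (p ^ Suc n)"
proof -
  assume p: "p > 0"
  have "(1 / sqrt (real p ^ Suc n)) * (1 / sqrt (real p ^ Suc n)) = 1 / real (p ^ Suc n)"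
    using p by (simp add: field_simps)
  hence "complex_of_real ((1 / sqrt (real p ^ Suc n)) * (1 / sqrt (real p ^ Suc n))) = 1 / of_nat (p ^ Suc n)"
    by simp
  thus ?thesis by (simp only: cc_def of_real_mult[symmetric])
qed

lemma perm_Phi:
  assumes p: "p > 0" and s: "s \<in> tensor_space p n (p ^ n)"
  shows "apply_op (tensor_space p n (p ^ n)) (perm_rep_ext p n (x,y,z)) (Phi p n ((\<lambda>_. 0), (\<lambda>_. 0), 0)) s
         = Phi p n (x,y,z) s"
proof -
  obtain v k where sv: "s = (v,k)" and v: "v \<in> heis_X p n" and k: "k < p ^ n"
    using s unfolding tensor_space_def by auto
  let ?P0 = "Phi p n ((\<lambda>_. 0), (\<lambda>_. 0), 0)"
  let ?w = "inva p n (x,y,z) v"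
  have "apply_op (tensor_space p n (p ^ n)) (perm_rep_ext p n (x,y,z)) ?P0 s
      = (\<Sum>u\<in>heis_X p n. \<Sum>j<p ^ n. (if v = heis_act p n (x,y,z) u then 1 else 0) *
            (if k = j then 1 else 0) * ?P0 (u,j))"
    unfolding apply_op_def tensor_space_def sv perm_rep_ext_def perm_rep_def sum.cartesian_product
    by (intro sum.cong) auto
  also have "\<dots> = (\<Sum>u\<in>heis_X p n. if u = ?w then ?P0 (u,k) else 0)"
  proof (rule sum.cong[OF refl])
    fix u assume u: "u \<in> heis_X p n"
    have "(\<Sum>j<p ^ n. (if v = heis_act p n (x,y,z) u then 1 else 0) * (if k = j then 1 else 0) * ?P0 (u,j))
        = (\<Sum>j<p ^ n. if j = k then (if v = heis_act p n (x,y,z) u then 1 else 0) * ?P0 (u,k) else 0)"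
      by (rule sum.cong) auto
    also have "\<dots> = (if v = heis_act p n (x,y,z) u then 1 else 0) * ?P0 (u,k)"
      using k by simp
    finally show "(\<Sum>j<p ^ n. (if v = heis_act p n (x,y,z) u then 1 else 0) * (if k = j then 1 else 0) * ?P0 (u,j))
        = (if u = ?w then ?P0 (u,k) else 0)"
      using act_eq_iff[OF p u v] by simp
  qed
  also have "\<dots> = ?P0 (?w, k)"
    using inva_X[OF p v] finite_Zp_vecs[of p "n+2"] by (simp add: heis_X_def)
  also have "\<dots> = Phi p n (x,y,z) s"
  proof -
    have wl: "?w (Suc n) = v (Suc n)" by (simp add: inva_def)
    show ?thesis
    proof (cases "v (Suc n) = 1")
      case False thus ?thesis using wl by (simp add: Phi_def sv)
    next
      case True
      have mdw: "md p n (\<lambda>_. 0) ?w = md p n y v"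
        using True by (auto simp: md_def inva_def)
      have "ee p (?w 0) = ee p (v 0 - (\<Sum>j<n. x j * md p n y v j) - z)"
      proof -
        have "(\<Sum>j<n. x j * ((v (Suc j) - y j * v (Suc n)) mod int p)) = (\<Sum>j<n. x j * md p n y v j)"
          using True by (intro sum.cong) (auto simp: md_def)
        hence "?w 0 = (v 0 - (\<Sum>j<n. x j * md p n y v j) - z) mod int p"
          using True by (simp add: inva_def)
        thus ?thesis using ee_mod[OF p] by simp
      qed
      thus ?thesis using True wl mdw by (simp add: Phi_def sv)
    qed
  qed
  finally show ?thesis .
qed



lemma ee_sum: "ee p (\<Sum>i<(m::nat). f i) = (\<Prod>i<m. ee p (f i))"
  by (induction m) (simp_all add: ee_add)

lemma ee_mult_mod: "p > 0 \<Longrightarrow> ee p (d * (k mod int p)) = ee p (d * k)"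
  by (metis ee_mod mod_mult_right_eq)

lemma prod_SS: "(\<Prod>j<Suc (Suc n). f j) = f 0 * (\<Prod>j<n. f (Suc j)) * (f (Suc n) :: complex)"
  by (simp only: prod.lessThan_Suc[of f "Suc n"]) (simp only: prod.lessThan_Suc_shift)

lemma G_mid:
  assumes p: "prime p" and d: "- int p < d" "d < int p"
  shows "(\<Sum>t\<in>{0..<int p}. ee p (d * ((t - c) mod int p))) = (if d = 0 then of_nat p else 0)"
proof -
  have p0: "p > 0" using p prime_gt_0_nat by blast
  have "(\<Sum>t\<in>{0..<int p}. ee p (d * ((t - c) mod int p))) = (\<Sum>t\<in>{0..<int p}. ee p (- (d * c)) * ee p (d * t))"
    by (intro sum.cong) (simp_all add: ee_mult_mod[OF p0] ee_add[symmetric] algebra_simps)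
  also have "\<dots> = ee p (- (d * c)) * (if int p dvd d then of_nat p else 0)"
    by (simp add: sum_distrib_left[symmetric] ee_geom[OF p0])
  also have "\<dots> = (if d = 0 then of_nat p else 0)"
  proof (cases "d = 0")
    case False
    have "\<not> int p dvd d"
    proof
      assume "int p dvd d"
      hence "\<bar>int p\<bar> \<le> \<bar>d\<bar>" using dvd_imp_le_int False by blast
      with d show False by linarith
    qed
    thus ?thesis using False by simp
  qed simp
  finally show ?thesis .
qed

lemma mod_diff_cancel: "0 \<le> a \<Longrightarrow> a < m \<Longrightarrow> 0 \<le> b \<Longrightarrow> b < m \<Longrightarrow> (c - a) mod m = (c - b) mod (m::int) \<Longrightarrow> a = b"
proof -
  assume h: "0 \<le> a" "a < m" "0 \<le> b" "b < m" "(c - a) mod m = (c - b) mod m"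
  have "a mod m = (c - (c - a) mod m) mod m" by (simp add: mod_diff_right_eq)
  also have "\<dots> = (c - (c - b) mod m) mod m" using h(5) by simp
  also have "\<dots> = b mod m" by (simp add: mod_diff_right_eq)
  finally show "a = b" using h by simp
qed

lemma enc_md_iff:
  assumes p: "p > 0" and ya: "ya \<in> Zp_vecs p n" and yb: "yb \<in> Zp_vecs p n"
  shows "(enc p n (md p n ya v) = enc p n (md p n yb v)) = (ya = yb)"
proof
  assume "enc p n (md p n ya v) = enc p n (md p n yb v)"
  hence E: "md p n ya v = md p n yb v" using enc_inj md_Zp[OF p] by blast
  show "ya = yb"
  proof
    fix i show "ya i = yb i"
    proof (cases "i < n")
      case True
      have "(v (Suc i) - ya i) mod int p = (v (Suc i) - yb i) mod int p"
        using fun_cong[OF E, of i] True by (simp add: md_def)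
      thus ?thesis using ya yb True unfolding Zp_vecs_def by (auto intro: mod_diff_cancel)
    next
      case False thus ?thesis using ya yb unfolding Zp_vecs_def by auto
    qed
  qed
qed simp

lemma Zp_eq_iff: "xa \<in> Zp_vecs p n \<Longrightarrow> xb \<in> Zp_vecs p n \<Longrightarrow> (xa = xb) = (\<forall>j<n. xa j = xb j)"
  unfolding Zp_vecs_def by (auto intro!: ext) (metis linorder_not_le)



lemma gram:
  assumes pp: "prime p"
    and xa: "xa \<in> Zp_vecs p n" and ya: "ya \<in> Zp_vecs p n"
    and xb: "xb \<in> Zp_vecs p n" and yb: "yb \<in> Zp_vecs p n"
  shows "inner_c (tensor_space p n (p ^ n)) (Phi p n (xa,ya,za)) (Phi p n (xb,yb,zb))
       = (if xa = xb \<and> ya = yb then ee p (za - zb) else 0)"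
proof -
  have p: "p > 0" using pp prime_gt_0_nat by blast
  have p2: "p \<ge> 2" using pp prime_ge_2_nat by blast
  define A where "A v = ee p (v 0 - (\<Sum>j<n. xa j * md p n ya v j) - za)" for v
  define B where "B v = ee p (v 0 - (\<Sum>j<n. xb j * md p n yb v j) - zb)" for v
  have 1: "inner_c (tensor_space p n (p ^ n)) (Phi p n (xa,ya,za)) (Phi p n (xb,yb,zb))
      = (\<Sum>v\<in>heis_X p n. \<Sum>k<p ^ n. cnj (Phi p n (xa,ya,za) (v,k)) * Phi p n (xb,yb,zb) (v,k))"
    unfolding inner_c_def tensor_space_def sum.cartesian_product by (intro sum.cong) auto
  have 2: "(\<Sum>k<p ^ n. cnj (Phi p n (xa,ya,za) (v,k)) * Phi p n (xb,yb,zb) (v,k))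
      = (if v (Suc n) = 1 \<and> ya = yb then cnj (A v) * B v * (cc p n * cc p n) else 0)" for v
  proof -
    let ?Ea = "enc p n (md p n ya v)" and ?Eb = "enc p n (md p n yb v)"
    have "(\<Sum>k<p ^ n. cnj (Phi p n (xa,ya,za) (v,k)) * Phi p n (xb,yb,zb) (v,k))
        = (\<Sum>k<p ^ n. if v (Suc n) = 1 \<and> ?Ea = ?Eb then (if k = ?Ea then cnj (A v * cc p n) * (B v * cc p n) else 0) else 0)"
      by (intro sum.cong) (auto simp: Phi_def A_def B_def)
    also have "\<dots> = (if v (Suc n) = 1 \<and> ?Ea = ?Eb then cnj (A v * cc p n) * (B v * cc p n) else 0)"
    proof (cases "v (Suc n) = 1 \<and> ?Ea = ?Eb")
      case True thus ?thesis by (simp add: enc_bound[OF md_Zp[OF p]])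
    next
      case False thus ?thesis by (simp only: if_not_P[OF False] if_False sum.neutral_const)
    qed
    also have "\<dots> = (if v (Suc n) = 1 \<and> ya = yb then cnj (A v) * B v * (cc p n * cc p n) else 0)"
      using enc_md_iff[OF p ya yb] cc_cnj by (simp add: algebra_simps)
    finally show ?thesis .
  qed
  show ?thesis
  proof (cases "ya = yb")
    case False
    thus ?thesis using 1 2 by simp
  next
    case True
    define d where "d j = xa j - xb j" for j
    define g where "g i t = (if i = 0 then 1 else if i = Suc n then (if t = 1 then 1 else 0)
        else ee p (d (i - 1) * ((t - ya (i - 1)) mod int p)))" for i t
    have pw: "(if v (Suc n) = 1 then cnj (A v) * B v else 0) = ee p (za - zb) * (\<Prod>i<n + 2. g i (v i))" for v
    proof -
      have "cnj (A v) * B v = ee p ((za - zb) + (\<Sum>j<n. d j * md p n ya v j))"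
        unfolding A_def B_def ee_cnj ee_add[symmetric] d_def using True
        by (simp add: sum_subtractf algebra_simps)
      also have "\<dots> = ee p (za - zb) * (\<Prod>j<n. ee p (d j * ((v (Suc j) - ya j) mod int p)))"
        by (simp add: ee_add ee_sum md_def)
      finally have c: "cnj (A v) * B v = \<dots>" .
      have "(\<Prod>i<n + 2. g i (v i)) = (\<Prod>j<n. ee p (d j * ((v (Suc j) - ya j) mod int p))) *
             (if v (Suc n) = 1 then 1 else 0)"
        unfolding add_2_eq_Suc' prod_SS by (simp add: g_def)
      thus ?thesis using c by simp
    qed
    have sums: "(\<Prod>i<n + 2. \<Sum>t\<in>{0..<int p}. g i t) = of_nat p * (if xa = xb then of_nat p ^ n else 0)"
    proof -
      have s0: "(\<Sum>t\<in>{0..<int p}. g 0 t) = of_nat p" by (simp add: g_def)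
      have sl: "(\<Sum>t\<in>{0..<int p}. g (Suc n) t) = 1" using p2 by (simp add: g_def)
      have sm: "(\<Sum>t\<in>{0..<int p}. g (Suc j) t) = (if d j = 0 then of_nat p else 0)" if "j < n" for j
      proof -
        have "0 \<le> xa j \<and> xa j < int p" "0 \<le> xb j \<and> xb j < int p"
          using xa xb that unfolding Zp_vecs_def by auto
        hence "- int p < d j" "d j < int p" unfolding d_def by linarith+
        moreover have "(\<Sum>t\<in>{0..<int p}. g (Suc j) t) = (\<Sum>t\<in>{0..<int p}. ee p (d j * ((t - ya j) mod int p)))"
          using that by (simp add: g_def)
        ultimately show ?thesis using G_mid[OF pp] by simp
      qed
      have "(\<Prod>j<n. \<Sum>t\<in>{0..<int p}. g (Suc j) t) = (\<Prod>j<n. if d j = 0 then of_nat p else (0::complex))"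
        using sm by (intro prod.cong) auto
      also have "\<dots> = (if xa = xb then of_nat p ^ n else 0)"
      proof (cases "xa = xb")
        case True thus ?thesis by (simp add: d_def)
      next
        case False
        then obtain j where "j < n" "xa j \<noteq> xb j" using Zp_eq_iff[OF xa xb] by blast
        thus ?thesis using False by (auto simp: d_def)
      qed
      finally show ?thesis unfolding add_2_eq_Suc' prod_SS using s0 sl by simp
    qed
    have "inner_c (tensor_space p n (p ^ n)) (Phi p n (xa,ya,za)) (Phi p n (xb,yb,zb))
        = (\<Sum>v\<in>heis_X p n. (cc p n * cc p n) * (if v (Suc n) = 1 then cnj (A v) * B v else 0))"
      unfolding 1 2 using True by (intro sum.cong) auto
    also have "\<dots> = (cc p n * cc p n) * ee p (za - zb) * (\<Sum>v\<in>Zp_vecs p (n + 2). \<Prod>i<n + 2. g i (v i))"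
      unfolding pw heis_X_def by (simp add: sum_distrib_left mult.assoc)
    also have "\<dots> = (cc p n * cc p n) * ee p (za - zb) * (of_nat p * (if xa = xb then of_nat p ^ n else 0))"
      by (simp only: sum_prod_Zp sums)
    also have "\<dots> = (if xa = xb \<and> ya = yb then ee p (za - zb) else 0)"
      using True p by (simp add: cc_sq)
    finally show ?thesis .
  qed
qed



lemma delta_sum: "finite S \<Longrightarrow> s \<in> S \<Longrightarrow> (\<Sum>t\<in>S. (if s = t then 1 else 0) * f t) = (f s :: complex)"
  by (subst sum.cong[OF refl, where h="\<lambda>t. if s = t then f t else 0"]) auto

lemma cnj_self: "cnj z * z = complex_of_real ((cmod z)\<^sup>2)"
  by (metis complex_mult_cnj cmod_power2 mult.commute)

lemma inner_rank1:
  "inner_c S f (apply_op S (\<lambda>s t. \<phi> s * cnj (\<phi> t)) f) = cnj (inner_c S \<phi> f) * inner_c S \<phi> f"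
proof -
  have "inner_c S f (apply_op S (\<lambda>s t. \<phi> s * cnj (\<phi> t)) f)
      = (\<Sum>s\<in>S. cnj (f s) * \<phi> s * (\<Sum>t\<in>S. cnj (\<phi> t) * f t))"
    unfolding inner_c_def apply_op_def by (simp add: sum_distrib_left mult.assoc)
  also have "\<dots> = (\<Sum>s\<in>S. cnj (f s) * \<phi> s) * (\<Sum>t\<in>S. cnj (\<phi> t) * f t)"
    by (simp add: sum_distrib_right)
  also have "(\<Sum>s\<in>S. cnj (f s) * \<phi> s) = cnj (inner_c S \<phi> f)"
    unfolding inner_c_def by (simp add: mult.commute)
  finally show ?thesis unfolding inner_c_def .
qed

lemma inner_diff_left: "inner_c S (\<lambda>s. a s - b s) h = inner_c S a h - inner_c S b h"
  unfolding inner_c_def by (simp add: left_diff_distrib sum_subtractf)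

lemma inner_diff_right: "inner_c S h (\<lambda>s. a s - b s) = inner_c S h a - inner_c S h b"
  unfolding inner_c_def by (simp add: right_diff_distrib sum_subtractf)

lemma inner_sum_left: "inner_c S (\<lambda>s. \<Sum>i\<in>I. c i * \<phi> i s) h = (\<Sum>i\<in>I. cnj (c i) * inner_c S (\<phi> i) h)"
proof -
  have "inner_c S (\<lambda>s. \<Sum>i\<in>I. c i * \<phi> i s) h = (\<Sum>s\<in>S. \<Sum>i\<in>I. cnj (c i) * (cnj (\<phi> i s) * h s))"
    unfolding inner_c_def by (simp add: cnj_sum sum_distrib_right mult.assoc)
  also have "\<dots> = (\<Sum>i\<in>I. \<Sum>s\<in>S. cnj (c i) * (cnj (\<phi> i s) * h s))" by (rule sum.swap)
  also have "\<dots> = (\<Sum>i\<in>I. cnj (c i) * inner_c S (\<phi> i) h)"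
    unfolding inner_c_def by (simp add: sum_distrib_left)
  finally show ?thesis .
qed

lemma inner_sum_right: "inner_c S h (\<lambda>s. \<Sum>i\<in>I. c i * \<phi> i s) = (\<Sum>i\<in>I. c i * inner_c S h (\<phi> i))"
proof -
  have "inner_c S h (\<lambda>s. \<Sum>i\<in>I. c i * \<phi> i s) = (\<Sum>s\<in>S. \<Sum>i\<in>I. c i * (cnj (h s) * \<phi> i s))"
    unfolding inner_c_def by (simp add: sum_distrib_left mult.left_commute)
  also have "\<dots> = (\<Sum>i\<in>I. \<Sum>s\<in>S. c i * (cnj (h s) * \<phi> i s))" by (rule sum.swap)
  also have "\<dots> = (\<Sum>i\<in>I. c i * inner_c S h (\<phi> i))"
    unfolding inner_c_def by (simp add: sum_distrib_left)
  finally show ?thesis .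
qed

lemma inner_conj: "inner_c S f g = cnj (inner_c S g f)"
  unfolding inner_c_def by (simp add: cnj_sum mult.commute)

lemma inner_compl:
  assumes "finite S"
  shows "inner_c S f (apply_op S (\<lambda>s t. (if s = t then 1 else 0) - (\<Sum>i\<in>I. \<phi> i s * cnj (\<phi> i t))) f)
       = inner_c S f f - (\<Sum>i\<in>I. cnj (inner_c S (\<phi> i) f) * inner_c S (\<phi> i) f)"
proof -
  have a: "apply_op S (\<lambda>s t. (if s = t then 1 else 0) - (\<Sum>i\<in>I. \<phi> i s * cnj (\<phi> i t))) f s
      = f s - (\<Sum>i\<in>I. inner_c S (\<phi> i) f * \<phi> i s)" if "s \<in> S" for s
  proof -
    have "apply_op S (\<lambda>s t. (if s = t then 1 else 0) - (\<Sum>i\<in>I. \<phi> i s * cnj (\<phi> i t))) f s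
        = (\<Sum>t\<in>S. (if s = t then 1 else 0) * f t) - (\<Sum>t\<in>S. \<Sum>i\<in>I. \<phi> i s * (cnj (\<phi> i t) * f t))"
      unfolding apply_op_def by (simp add: left_diff_distrib sum_subtractf sum_distrib_right mult.assoc)
    also have "(\<Sum>t\<in>S. \<Sum>i\<in>I. \<phi> i s * (cnj (\<phi> i t) * f t)) = (\<Sum>i\<in>I. \<Sum>t\<in>S. \<phi> i s * (cnj (\<phi> i t) * f t))"
      by (rule sum.swap)
    also have "\<dots> = (\<Sum>i\<in>I. inner_c S (\<phi> i) f * \<phi> i s)"
      unfolding inner_c_def by (simp add: sum_distrib_left mult.commute)
    finally show ?thesis using delta_sum[OF assms that] by simp
  qed
  have "inner_c S f (apply_op S (\<lambda>s t. (if s = t then 1 else 0) - (\<Sum>i\<in>I. \<phi> i s * cnj (\<phi> i t))) f)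
      = inner_c S f (\<lambda>s. f s - (\<Sum>i\<in>I. inner_c S (\<phi> i) f * \<phi> i s))"
    unfolding inner_c_def[of S f] using a by (intro sum.cong) auto
  also have "\<dots> = inner_c S f f - (\<Sum>i\<in>I. inner_c S (\<phi> i) f * inner_c S f (\<phi> i))"
    by (simp only: inner_diff_right inner_sum_right)
  also have "\<dots> = inner_c S f f - (\<Sum>i\<in>I. cnj (inner_c S (\<phi> i) f) * inner_c S (\<phi> i) f)"
    by (subst inner_conj[of S f]) (simp add: mult.commute)
  finally show ?thesis .
qed

lemma inner_self: "inner_c S g g = complex_of_real (\<Sum>s\<in>S. (cmod (g s))\<^sup>2)"
  unfolding inner_c_def of_real_sum by (rule sum.cong[OF refl], rule cnj_self)

lemma bessel:
  assumes S: "finite S" and I: "finite I"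
    and on: "\<And>i j. i \<in> I \<Longrightarrow> j \<in> I \<Longrightarrow> inner_c S (\<phi> i) (\<phi> j) = (if i = j then 1 else 0)"
  shows "inner_c S f f - (\<Sum>i\<in>I. cnj (inner_c S (\<phi> i) f) * inner_c S (\<phi> i) f)
       = complex_of_real (\<Sum>s\<in>S. (cmod (f s - (\<Sum>i\<in>I. inner_c S (\<phi> i) f * \<phi> i s)))\<^sup>2)"
proof -
  define \<alpha> where "\<alpha> i = inner_c S (\<phi> i) f" for i
  define g where "g = (\<lambda>s. f s - (\<Sum>i\<in>I. \<alpha> i * \<phi> i s))"
  have gphi: "inner_c S g (\<phi> j) = 0" if j: "j \<in> I" for j
  proof -
    have "inner_c S g (\<phi> j) = inner_c S f (\<phi> j) - (\<Sum>i\<in>I. cnj (\<alpha> i) * inner_c S (\<phi> i) (\<phi> j))"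
      unfolding g_def inner_diff_left inner_sum_left ..
    also have "(\<Sum>i\<in>I. cnj (\<alpha> i) * inner_c S (\<phi> i) (\<phi> j)) = cnj (\<alpha> j)"
    proof -
      have "(\<Sum>i\<in>I. cnj (\<alpha> i) * inner_c S (\<phi> i) (\<phi> j)) = (\<Sum>i\<in>I. if i = j then cnj (\<alpha> j) else 0)"
        using on j by (intro sum.cong) auto
      thus ?thesis using j I by simp
    qed
    also have "inner_c S f (\<phi> j) = cnj (\<alpha> j)"
      unfolding \<alpha>_def by (rule inner_conj)
    finally show ?thesis by simp
  qed
  have "inner_c S g g = inner_c S g f - (\<Sum>i\<in>I. \<alpha> i * inner_c S g (\<phi> i))"
    by (subst (2) g_def) (simp only: inner_diff_right inner_sum_right)
  also have "(\<Sum>i\<in>I. \<alpha> i * inner_c S g (\<phi> i)) = 0" using gphi by simp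
  also have "inner_c S g f = inner_c S f f - (\<Sum>i\<in>I. cnj (\<alpha> i) * \<alpha> i)"
    unfolding g_def inner_diff_left inner_sum_left \<alpha>_def ..
  finally have "inner_c S f f - (\<Sum>i\<in>I. cnj (\<alpha> i) * \<alpha> i) = inner_c S g g" by simp
  thus ?thesis unfolding inner_self g_def \<alpha>_def .
qed



lemma G_mem: "(x,y,z) \<in> heis_group p n \<longleftrightarrow> x \<in> Zp_vecs p n \<and> y \<in> Zp_vecs p n \<and> z \<in> {0..<int p}"
  by (simp add: heis_group_def)

lemma G_eq: "heis_group p n = Zp_vecs p n \<times> Zp_vecs p n \<times> {0..<int p}"
  by (auto simp: heis_group_def)

lemma finite_G: "finite (heis_group p n)"
  by (simp add: G_eq finite_Zp_vecs)

lemma zero_Zp: "p > 0 \<Longrightarrow> (\<lambda>_. 0) \<in> Zp_vecs p n"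
  by (simp add: Zp_vecs_def)

lemma Zp_fix: "x \<in> Zp_vecs p n \<Longrightarrow> (\<lambda>i. if i < n then (x i + 0) mod int p else 0) = x"
  by (rule ext) (auto simp: Zp_vecs_def)

lemma coset_char:
  assumes p: "p > 0" and a: "(x,y,z) \<in> heis_group p n"
  shows "heis_coset p n (x,y,z) = {(x,y,w) | w. w \<in> {0..<int p}}"
proof -
  have xy: "x \<in> Zp_vecs p n" "y \<in> Zp_vecs p n" and z: "z \<in> {0..<int p}" using a by (auto simp: G_mem)
  have cen: "heis_center p n = (\<lambda>w. ((\<lambda>_. 0), (\<lambda>_. 0), w)) ` {0..<int p}"
    by (auto simp: heis_center_def)
  have m: "heis_mult p n (x,y,z) ((\<lambda>_. 0), (\<lambda>_. 0), w) = (x, y, (z + w) mod int p)" for w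
    using Zp_fix[OF xy(1)] Zp_fix[OF xy(2)] by simp
  have "heis_coset p n (x,y,z) = (\<lambda>w. (x, y, (z + w) mod int p)) ` {0..<int p}"
    unfolding heis_coset_def cen image_image m ..
  also have "\<dots> = {(x,y,w) | w. w \<in> {0..<int p}}"
  proof (rule set_eqI, rule iffI)
    fix b assume "b \<in> (\<lambda>w. (x, y, (z + w) mod int p)) ` {0..<int p}"
    thus "b \<in> {(x,y,w) | w. w \<in> {0..<int p}}" using p by auto
  next
    fix b assume "b \<in> {(x,y,w) | w. w \<in> {0..<int p}}"
    then obtain w where b: "b = (x,y,w)" and w: "w \<in> {0..<int p}" by blast
    have "(z + (w - z) mod int p) mod int p = w" using w by (simp add: mod_add_right_eq)
    hence "b = (\<lambda>w. (x, y, (z + w) mod int p)) ((w - z) mod int p)" using b by simp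
    moreover have "(w - z) mod int p \<in> {0..<int p}" using p by simp
    ultimately show "b \<in> (\<lambda>w. (x, y, (z + w) mod int p)) ` {0..<int p}" by blast
  qed
  finally show ?thesis .
qed

lemma coset_eq:
  assumes p: "p > 0" and a: "(x,y,z) \<in> heis_group p n" and b: "(x',y',z') \<in> heis_group p n"
  shows "heis_coset p n (x,y,z) = heis_coset p n (x',y',z') \<longleftrightarrow> x = x' \<and> y = y'"
proof
  assume "heis_coset p n (x,y,z) = heis_coset p n (x',y',z')"
  hence "(x,y,z) \<in> heis_coset p n (x',y',z')"
    using coset_char[OF p a] a by (auto simp: G_mem)
  thus "x = x' \<and> y = y'" using coset_char[OF p b] by auto
next
  assume "x = x' \<and> y = y'"
  thus "heis_coset p n (x,y,z) = heis_coset p n (x',y',z')"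
    using coset_char[OF p a] coset_char[OF p b] by simp
qed

lemma self_in_coset: "p > 0 \<Longrightarrow> a \<in> heis_group p n \<Longrightarrow> a \<in> heis_coset p n a"
  by (cases a) (auto simp: coset_char G_mem)

lemma coset_sub: "p > 0 \<Longrightarrow> a \<in> heis_group p n \<Longrightarrow> heis_coset p n a \<subseteq> heis_group p n"
  by (cases a) (auto simp: coset_char G_mem)

lemma coset_of_mem: "p > 0 \<Longrightarrow> a \<in> heis_group p n \<Longrightarrow> b \<in> heis_coset p n a \<Longrightarrow> heis_coset p n b = heis_coset p n a"
proof -
  assume p: "p > 0" and a: "a \<in> heis_group p n" and b: "b \<in> heis_coset p n a"
  obtain x y z where az: "a = (x,y,z)" by (cases a)
  obtain x' y' z' where bz: "b = (x',y',z')" by (cases b)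
  have bG: "b \<in> heis_group p n" using coset_sub[OF p a] b by blast
  have "x' = x \<and> y' = y" using b coset_char[OF p a[unfolded az]] az bz by auto
  thus ?thesis using coset_eq[OF p bG[unfolded bz] a[unfolded az]] az bz by simp
qed

lemma inner_apply_add:
  "inner_c S f (apply_op S (\<lambda>s t. A s t + B s t) f) = inner_c S f (apply_op S A f) + inner_c S f (apply_op S B f)"
  unfolding inner_c_def apply_op_def by (simp add: distrib_left distrib_right sum.distrib)

lemma inner_apply_cong:
  "(\<And>s. s \<in> S \<Longrightarrow> f s = g s) \<Longrightarrow> inner_c S f (apply_op S M f) = inner_c S g (apply_op S M g)"
  unfolding inner_c_def apply_op_def by (intro sum.cong refl) simp_all


theorem theorem20:
  fixes p n :: nat
  assumes "prime p" and "n \<ge> 1"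
  shows "\<exists>N psi U E. N \<ge> 1 \<and>
           is_unit_vec (tensor_space p n N) psi \<and>
           is_unitary (tensor_space p n N) U \<and>
           is_povm (tensor_space p n N) (heis_cosets p n) E \<and>
           success_prob p n N psi U E = 1"
proof -
  have pp: "prime p" by fact
  have p: "p > 0" using pp prime_gt_0_nat by blast
  define N where "N = p ^ n"
  define S where "S = tensor_space p n N"
  define z0 :: heis_elt where "z0 = ((\<lambda>_. 0), (\<lambda>_. 0), 0)"
  define psi where "psi = Phi p n z0"
  define U where "U = (\<lambda>(s::(nat \<Rightarrow> int) \<times> nat) t. if s = t then 1 else (0::complex))"
  define CS where "CS = heis_cosets p n"
  define rep where "rep C = (SOME a. a \<in> C)" for C :: "heis_elt set"
  define phi where "phi C = Phi p n (rep C)" for C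
  define C0 where "C0 = heis_coset p n z0"
  define P where "P s t = (\<Sum>D\<in>CS. phi D s * cnj (phi D t))" for s t
  define E where "E C s t = phi C s * cnj (phi C t) + (if C = C0 then (if s = t then 1 else 0) - P s t else 0)"
    for C s t
  have finS: "finite S" unfolding S_def tensor_space_def heis_X_def by (simp add: finite_Zp_vecs)
  have z0G: "z0 \<in> heis_group p n" unfolding z0_def using p by (simp add: G_mem zero_Zp)
  have finCS: "finite CS" unfolding CS_def heis_cosets_def by (simp add: finite_G)
  have C0CS: "C0 \<in> CS" unfolding CS_def heis_cosets_def C0_def using z0G by blast
  have repC: "rep C \<in> heis_group p n \<and> heis_coset p n (rep C) = C" if C: "C \<in> CS" for C
  proof -
    obtain a where a: "a \<in> heis_group p n" and Ca: "C = heis_coset p n a"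
      using C unfolding CS_def heis_cosets_def by blast
    have "a \<in> C" using self_in_coset[OF p a] Ca by simp
    hence r: "rep C \<in> C" unfolding rep_def by (rule someI)
    show ?thesis using r coset_sub[OF p a] coset_of_mem[OF p a] Ca by blast
  qed
  have ortho: "inner_c S (phi C) (phi D) = (if C = D then 1 else 0)" if C: "C \<in> CS" and D: "D \<in> CS" for C D
  proof -
    obtain xc yc zc where rc: "rep C = (xc,yc,zc)" by (cases "rep C")
    obtain xd yd zd where rd: "rep D = (xd,yd,zd)" by (cases "rep D")
    have cG: "(xc,yc,zc) \<in> heis_group p n" and cc: "heis_coset p n (xc,yc,zc) = C" using repC[OF C] rc by auto
    have dG: "(xd,yd,zd) \<in> heis_group p n" and dd: "heis_coset p n (xd,yd,zd) = D" using repC[OF D] rd by auto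
    have g: "inner_c S (phi C) (phi D) = (if xc = xd \<and> yc = yd then ee p (zc - zd) else 0)"
      unfolding S_def N_def phi_def rc rd using cG dG by (intro gram[OF pp]) (auto simp: G_mem)
    show ?thesis
    proof (cases "C = D")
      case True thus ?thesis using g rc rd by simp
    next
      case False
      hence nxy: "\<not> (xc = xd \<and> yc = yd)" using coset_eq[OF p cG dG] cc dd by simp
      show ?thesis unfolding g if_not_P[OF nxy] if_not_P[OF False] ..
    qed
  qed
  have alpha: "cnj (inner_c S (phi D) (Phi p n a)) * inner_c S (phi D) (Phi p n a)
      = (if D = heis_coset p n a then 1 else 0)" if D: "D \<in> CS" and a: "a \<in> heis_group p n" for D a
  proof -
    obtain x y z where az: "a = (x,y,z)" by (cases a)
    obtain xd yd zd where rd: "rep D = (xd,yd,zd)" by (cases "rep D")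
    have aG: "(x,y,z) \<in> heis_group p n" using a az by simp
    have dG: "(xd,yd,zd) \<in> heis_group p n" and dd: "heis_coset p n (xd,yd,zd) = D" using repC[OF D] rd by auto
    have g: "inner_c S (phi D) (Phi p n a) = (if xd = x \<and> yd = y then ee p (zd - z) else 0)"
      unfolding S_def N_def phi_def rd az using aG dG by (intro gram[OF pp]) (auto simp: G_mem)
    have "D = heis_coset p n a \<longleftrightarrow> xd = x \<and> yd = y" using coset_eq[OF p dG aG] dd az by simp
    thus ?thesis using g ee_cnj_mult by simp
  qed
  have Esplit: "inner_c S f (apply_op S (E C) f) = cnj (inner_c S (phi C) f) * inner_c S (phi C) f
      + (if C = C0 then inner_c S f f - (\<Sum>D\<in>CS. cnj (inner_c S (phi D) f) * inner_c S (phi D) f) else 0)" for C f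
  proof (cases "C = C0")
    case True
    have "E C = (\<lambda>s t. phi C s * cnj (phi C t) + ((if s = t then 1 else 0) - (\<Sum>D\<in>CS. phi D s * cnj (phi D t))))"
      unfolding E_def P_def using True by simp
    thus ?thesis using True by (simp only: inner_apply_add inner_rank1 inner_compl[OF finS]) simp
  next
    case False
    have "E C = (\<lambda>s t. phi C s * cnj (phi C t))" unfolding E_def using False by simp
    thus ?thesis using False by (simp add: inner_rank1)
  qed
  show ?thesis
  proof (intro exI conjI)
    show "N \<ge> 1" unfolding N_def using p by simp
    show "is_unit_vec (tensor_space p n N) psi"
      unfolding is_unit_vec_def psi_def z0_def N_def
      using gram[OF pp zero_Zp[OF p] zero_Zp[OF p] zero_Zp[OF p] zero_Zp[OF p]] by simp
    show "is_unitary (tensor_space p n N) U"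
      unfolding is_unitary_def
    proof (intro ballI)
      fix s t assume s: "s \<in> tensor_space p n N" and t: "t \<in> tensor_space p n N"
      have "(\<Sum>k\<in>tensor_space p n N. cnj (U k s) * U k t) = (\<Sum>k\<in>tensor_space p n N. if k = s then (if s = t then 1 else 0) else 0)"
        unfolding U_def by (intro sum.cong) auto
      thus "(\<Sum>k\<in>tensor_space p n N. cnj (U k s) * U k t) = (if s = t then 1 else 0)"
        using s finS unfolding S_def by simp
    qed
    show "is_povm (tensor_space p n N) (heis_cosets p n) E"
      unfolding is_povm_def
    proof (intro conjI ballI)
      fix C assume C: "C \<in> heis_cosets p n"
      show "is_psd (tensor_space p n N) (E C)"
        unfolding is_psd_def
      proof (intro allI conjI)
        fix f
        have b: "(if C = C0 then inner_c S f f - (\<Sum>D\<in>CS. cnj (inner_c S (phi D) f) * inner_c S (phi D) f) else 0)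
           = complex_of_real (if C = C0 then (\<Sum>s\<in>S. (cmod (f s - (\<Sum>D\<in>CS. inner_c S (phi D) f * phi D s)))\<^sup>2) else 0)"
        proof (cases "C = C0")
          case True show ?thesis unfolding if_P[OF True] by (rule bessel[OF finS finCS ortho])
        next
          case False show ?thesis unfolding if_not_P[OF False] by simp
        qed
        have e: "inner_c S f (apply_op S (E C) f) = complex_of_real ((cmod (inner_c S (phi C) f))\<^sup>2
            + (if C = C0 then (\<Sum>s\<in>S. (cmod (f s - (\<Sum>D\<in>CS. inner_c S (phi D) f * phi D s)))\<^sup>2) else 0))"
          unfolding Esplit b unfolding cnj_self by simp
        show "Im (inner_c (tensor_space p n N) f (apply_op (tensor_space p n N) (E C) f)) = 0"
          using e unfolding S_def by simp
        show "Re (inner_c (tensor_space p n N) f (apply_op (tensor_space p n N) (E C) f)) \<ge> 0"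
          using e unfolding S_def by (simp add: sum_nonneg)
      qed
    next
      fix s t assume s: "s \<in> tensor_space p n N" and t: "t \<in> tensor_space p n N"
      have "(\<Sum>C\<in>CS. E C s t) = P s t + (\<Sum>C\<in>CS. if C = C0 then (if s = t then 1 else 0) - P s t else 0)"
        unfolding E_def P_def by (simp add: sum.distrib)
      also have "\<dots> = (if s = t then 1 else 0)" using finCS C0CS by simp
      finally show "(\<Sum>C\<in>heis_cosets p n. E C s t) = (if s = t then 1 else 0)" unfolding CS_def .
    qed
    show "success_prob p n N psi U E = 1"
    proof -
      have tm: "inner_c S (apply_op S U (apply_op S (perm_rep_ext p n a) psi))
            (apply_op S (E (heis_coset p n a)) (apply_op S U (apply_op S (perm_rep_ext p n a) psi))) = 1"
        if a: "a \<in> heis_group p n" for a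
      proof -
        obtain x y z where az: "a = (x,y,z)" by (cases a)
        have aCS: "heis_coset p n a \<in> CS" unfolding CS_def heis_cosets_def using a by blast
        have pw: "apply_op S U (apply_op S (perm_rep_ext p n a) psi) s = Phi p n a s" if s: "s \<in> S" for s
        proof -
          have "apply_op S U (apply_op S (perm_rep_ext p n a) psi) s = apply_op S (perm_rep_ext p n a) psi s"
          proof -
            have "apply_op S U g s = g s" for g
              unfolding apply_op_def U_def using delta_sum[OF finS s] by simp
            thus ?thesis .
          qed
          also have "\<dots> = Phi p n a s"
            using perm_Phi[OF p s[unfolded S_def N_def], of x y z] az unfolding S_def N_def psi_def z0_def by simp
          finally show ?thesis .
        qed
        have "inner_c S (apply_op S U (apply_op S (perm_rep_ext p n a) psi))
            (apply_op S (E (heis_coset p n a)) (apply_op S U (apply_op S (perm_rep_ext p n a) psi)))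
            = inner_c S (Phi p n a) (apply_op S (E (heis_coset p n a)) (Phi p n a))"
          by (rule inner_apply_cong) (rule pw)
        also have "\<dots> = 1"
        proof -
          have s1: "(\<Sum>D\<in>CS. cnj (inner_c S (phi D) (Phi p n a)) * inner_c S (phi D) (Phi p n a)) = 1"
            using alpha[OF _ a] aCS finCS by simp
          have n1: "inner_c S (Phi p n a) (Phi p n a) = 1"
            using a az gram[OF pp, of x n y x y z z] unfolding S_def N_def by (simp add: G_mem)
          show ?thesis unfolding Esplit using alpha[OF aCS a] s1 n1 by simp
        qed
        finally show ?thesis .
      qed
      have cG: "card (heis_group p n) \<noteq> 0" using finite_G z0G by auto
      have "success_prob p n N psi U E = (1 / of_nat (card (heis_group p n))) * (\<Sum>a\<in>heis_group p n. 1)"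
        unfolding success_prob_def Let_def S_def[symmetric] using tm by (intro arg_cong2[where f="(*)"] sum.cong) auto
      also have "\<dots> = 1" using cG by simp
      finally show ?thesis .
    qed
  qed
qed


end
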